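(* Let $h_n>0$ and $k_n>0$ be sequences with $h_n\to0$, $k_n\to0$, let $f$ be a real valued function defined on the set $D=\{0,h_1,-k_1,h_2,-k_2,\ldots\}$, and let $L,R$ be real numbers such that \[\frac{f(h_n)}{h_n}\to R\quad\text{and}\quad\frac{f(-k_n)}{-k_n}\to L.\] Then every sequential cord derivative of $f$ at $0$ is a real number between $R$ and $L$ (inclusive).
   Context: $L'\in\overline{\mathbb{R}}=\mathbb{R}\cup\{\pm\infty\}$ is a sequential cord derivative of $f$ at $0$ if there are sequences $h'_n>0$, $k'_n>0$ with $h'_n\to0$, $k'_n\to0$, $h'_n\in D$, $-k'_n\in D$ for all $n$, and $\frac{f(h'_n)-f(-k'_n)}{h'_n+k'_n}\to L'$. *)

theory Defs
  imports "HOL-Analysis.Analysis"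
begin

definition seq_cord_deriv :: "(real \<Rightarrow> real) \<Rightarrow> real set \<Rightarrow> ereal \<Rightarrow> bool" where
  "seq_cord_deriv f D L' \<longleftrightarrow>
     (\<exists>h' k' :: nat \<Rightarrow> real.
        (\<forall>n. h' n > 0 \<and> k' n > 0 \<and> h' n \<in> D \<and> - k' n \<in> D) \<and>
        h' \<longlonglongrightarrow> 0 \<and> k' \<longlonglongrightarrow> 0 \<and>
        (\<lambda>n. ereal ((f (h' n) - f (- k' n)) / (h' n + k' n))) \<longlonglongrightarrow> L')"

end

theory Submission
  imports Defs
begin

lemma sub_lim:
  fixes g :: "real \<Rightarrow> real" and h s :: "nat \<Rightarrow> real"
  assumes hp: "\<forall>n. h n > 0" and gl: "(\<lambda>n. g (h n)) \<longlonglongrightarrow> R"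
    and sr: "\<forall>n. s n \<in> range h" and s0: "s \<longlonglongrightarrow> 0"
  shows "(\<lambda>n. g (s n)) \<longlonglongrightarrow> R"
proof (rule LIMSEQ_I)
  fix e :: real assume e: "0 < e"
  obtain N where N: "\<forall>m\<ge>N. norm (g (h m) - R) < e" using LIMSEQ_D[OF gl e] by blast
  define d where "d = Min (insert 1 (h ` {..<N}))"
  have dpos: "d > 0" unfolding d_def using hp by (subst Min_gr_iff) auto
  have dle: "\<forall>m<N. d \<le> h m" unfolding d_def by auto
  obtain M where M: "\<forall>n\<ge>M. norm (s n - 0) < d" using LIMSEQ_D[OF s0 dpos] by blast
  show "\<exists>no. \<forall>n\<ge>no. norm (g (s n) - R) < e"
  proof (intro exI allI impI)
    fix n assume "n \<ge> M"
    then have sl: "\<bar>s n\<bar> < d" using M by auto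
    obtain m where m: "s n = h m" using sr by blast
    have "h m > 0" using hp by auto
    then have "\<not> m < N" using dle sl m by force
    then show "norm (g (s n) - R) < e" using N m by auto
  qed
qed

theorem proposition4p4:
  fixes h k :: "nat \<Rightarrow> real" and f :: "real \<Rightarrow> real" and L R :: real
    and D :: "real set" and L' :: ereal
  assumes "\<forall>n. h n > 0" and "\<forall>n. k n > 0"
    and "h \<longlonglongrightarrow> 0" and "k \<longlonglongrightarrow> 0"
    and "D = {0} \<union> range h \<union> range (\<lambda>n. - k n)"
    and "(\<lambda>n. f (h n) / h n) \<longlonglongrightarrow> R"
    and "(\<lambda>n. f (- k n) / (- k n)) \<longlonglongrightarrow> L"
    and "seq_cord_deriv f D L'"
  shows "\<exists>r::real. L' = ereal r \<and> min R L \<le> r \<and> r \<le> max R L"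
proof -
  obtain h' k' :: "nat \<Rightarrow> real" where
    hk: "\<forall>n. h' n > 0 \<and> k' n > 0 \<and> h' n \<in> D \<and> - k' n \<in> D"
    and h'0: "h' \<longlonglongrightarrow> 0" and k'0: "k' \<longlonglongrightarrow> 0"
    and lim: "(\<lambda>n. ereal ((f (h' n) - f (- k' n)) / (h' n + k' n))) \<longlonglongrightarrow> L'"
    using assms(8) unfolding seq_cord_deriv_def by blast
  have hr: "\<forall>n. h' n \<in> range h"
  proof
    fix n
    have "h' n \<in> D" "h' n > 0" using hk by auto
    then show "h' n \<in> range h" using assms(2,5) by (auto, metis neg_0_less_iff_less not_less_iff_gr_or_eq)
  qed
  have kr: "\<forall>n. k' n \<in> range k"
  proof
    fix n
    have "- k' n \<in> D" "k' n > 0" using hk by auto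
    then show "k' n \<in> range k" using assms(1,5)
      by (auto, metis add.inverse_inverse neg_0_less_iff_less not_less_iff_gr_or_eq rangeI)
  qed
  define a where "a n = f (h' n) / h' n" for n
  define b where "b n = f (- k' n) / (- k' n)" for n
  have a: "a \<longlonglongrightarrow> R" unfolding a_def
    using sub_lim[of h "\<lambda>x. f x / x" R h'] assms(1,6) hr h'0 by auto
  have b: "b \<longlonglongrightarrow> L" unfolding b_def
    using sub_lim[of k "\<lambda>x. f (- x) / (- x)" L k'] assms(2,7) kr k'0 by auto
  define c where "c n = (f (h' n) - f (- k' n)) / (h' n + k' n)" for n
  have ceq: "c n = (h' n * a n + k' n * b n) / (h' n + k' n)" for n
  proof -
    have "h' n > 0" "k' n > 0" using hk by auto
    then show ?thesis unfolding c_def a_def b_def by (simp add: field_simps)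
  qed
  have cb: "min (a n) (b n) \<le> c n \<and> c n \<le> max (a n) (b n)" for n
  proof -
    have p: "h' n > 0" "k' n > 0" using hk by auto
    have "h' n * min (a n) (b n) + k' n * min (a n) (b n) \<le> h' n * a n + k' n * b n"
      using p by (intro add_mono mult_left_mono) auto
    moreover have "h' n * a n + k' n * b n \<le> h' n * max (a n) (b n) + k' n * max (a n) (b n)"
      using p by (intro add_mono mult_left_mono) auto
    ultimately show ?thesis unfolding ceq using p
      by (simp add: field_simps pos_le_divide_eq pos_divide_le_eq)
  qed
  have lim': "(\<lambda>n. ereal (c n)) \<longlonglongrightarrow> L'" using lim unfolding c_def .
  have mn: "(\<lambda>n. ereal (min (a n) (b n))) \<longlonglongrightarrow> ereal (min R L)"
    using tendsto_min[OF a b] by (rule tendsto_ereal)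
  have mx: "(\<lambda>n. ereal (max (a n) (b n))) \<longlonglongrightarrow> ereal (max R L)"
    using tendsto_max[OF a b] by (rule tendsto_ereal)
  have lo: "ereal (min R L) \<le> L'"
    by (rule LIMSEQ_le[OF mn lim']) (intro exI[of _ 0] allI impI, subst ereal_less_eq(3), use cb in blast)
  have hi: "L' \<le> ereal (max R L)"
    by (rule LIMSEQ_le[OF lim' mx]) (intro exI[of _ 0] allI impI, subst ereal_less_eq(3), use cb in blast)
  show ?thesis using lo hi by (cases L') (auto simp: min_def max_def split: if_splits)
qed

end
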